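(* Consider a multi-agent Markov game with agents $\mathcal N=\{1,\dots,n\}$, finite local state spaces $\mathcal S_i$ and action spaces $\mathcal A_i$, bounded rewards $r_i:\mathcal S\times\mathcal A\to\mathbb R$, discount $\gamma\in(0,1)$, and local policies $\xi_i:\mathcal S_i\to\Delta(\mathcal A_i)$ (joint policy $\xi(a\mid s)=\prod_i\xi_i(a_i\mid s_i)$). Suppose that (i) the transitions are completely local: given $(s(t),a(t))$, the components $s_i(t+1)$ are drawn independently with $s_i(t+1)\sim P_i(\cdot\mid s_i(t),a_i(t))$; (ii) the one-shot game is a potential game: there is $\phi:\mathcal S\times\mathcal A\to\mathbb R$ such that for all $i$, all $(s_i,a_i),(s_i',a_i')\in\mathcal S_i\times\mathcal A_i$ and all $(s_{-i},a_{-i})$, $r_i(s_i,a_i,s_{-i},a_{-i})-r_i(s_i',a_i',s_{-i},a_{-i})=\phi(s_i,a_i,s_{-i},a_{-i})-\phi(s_i',a_i',s_{-i},a_{-i})$. Then there is a function $\Phi:\Xi\times\mathcal S\to\mathbb R$ (namely $\Phi^\xi(s)=\sum_{t\ge0}\gamma^t\mathbb E_\xi[\phi(s(t),a(t))\mid s(0)=s]$) such that for every agent $i$, all $\xi_i,\xi_i'\in\Xi_i$, all $\xi_{-i}\in\Xi_{-i}$ and all $s\in\mathcal S$, $$V_i^{\xi_i,\xi_{-i}}(s)-V_i^{\xi_i',\xi_{-i}}(s)=\Phi^{\xi_i,\xi_{-i}}(s)-\Phi^{\xi_i',\xi_{-i}}(s).$$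
   Context: $\Xi_i$ denotes the set of local policies of agent $i$, $\Xi=\prod_i\Xi_i$, $\Xi_{-i}=\prod_{j\ne i}\Xi_j$. $V_i^\xi(s)=\sum_{t\ge0}\gamma^t\mathbb E_\xi[r_i(s(t),a(t))\mid s(0)=s]$, where $a(t)\sim\xi(\cdot\mid s(t))$. *)

theory Defs
  imports "HOL-Analysis.Analysis"
begin

text \<open>Agent i has a finite local state
space S i (a subset of 's) and a finite local action space A i (a subset of 'a).\<close>

definition joint_states :: "('i \<Rightarrow> 's set) \<Rightarrow> ('i \<Rightarrow> 's) set" where
  "joint_states S = Pi\<^sub>E UNIV S"

definition joint_actions :: "('i \<Rightarrow> 'a set) \<Rightarrow> ('i \<Rightarrow> 'a) set" where
  "joint_actions A = Pi\<^sub>E UNIV A"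

definition is_distr :: "'b set \<Rightarrow> ('b \<Rightarrow> real) \<Rightarrow> bool" where
  "is_distr X p \<longleftrightarrow> (\<forall>x\<in>X. p x \<ge> 0) \<and> (\<Sum>x\<in>X. p x) = 1"

text \<open>A local policy xi_i : S_i \<rightarrow> \<Delta>(A_i); xi_i s_i a_i is the probability of a_i in s_i.\<close>
definition local_policy :: "'s set \<Rightarrow> 'a set \<Rightarrow> ('s \<Rightarrow> 'a \<Rightarrow> real) \<Rightarrow> bool" where
  "local_policy Si Ai xi \<longleftrightarrow> (\<forall>si\<in>Si. is_distr Ai (xi si))"

definition policy_profile ::
  "('i \<Rightarrow> 's set) \<Rightarrow> ('i \<Rightarrow> 'a set) \<Rightarrow> ('i \<Rightarrow> 's \<Rightarrow> 'a \<Rightarrow> real) \<Rightarrow> bool" where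
  "policy_profile S A xi \<longleftrightarrow> (\<forall>i. local_policy (S i) (A i) (xi i))"

definition joint_policy :: "('i::finite \<Rightarrow> 's \<Rightarrow> 'a \<Rightarrow> real) \<Rightarrow> ('i \<Rightarrow> 's) \<Rightarrow> ('i \<Rightarrow> 'a) \<Rightarrow> real" where
  "joint_policy xi s a = (\<Prod>i\<in>UNIV. xi i (s i) (a i))"

text \<open>Completely local transition kernels: P i s_i a_i s_i' is the probability that
agent i moves to s_i' from s_i under a_i.\<close>
definition local_transitions ::
  "('i \<Rightarrow> 's set) \<Rightarrow> ('i \<Rightarrow> 'a set) \<Rightarrow> ('i \<Rightarrow> 's \<Rightarrow> 'a \<Rightarrow> 's \<Rightarrow> real) \<Rightarrow> bool" where
  "local_transitions S A P \<longleftrightarrow>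
     (\<forall>i. \<forall>si\<in>S i. \<forall>ai\<in>A i. is_distr (S i) (P i si ai))"

definition joint_trans :: "('i::finite \<Rightarrow> 's \<Rightarrow> 'a \<Rightarrow> 's \<Rightarrow> real) \<Rightarrow> ('i \<Rightarrow> 's) \<Rightarrow> ('i \<Rightarrow> 'a) \<Rightarrow> ('i \<Rightarrow> 's) \<Rightarrow> real" where
  "joint_trans P s a s' = (\<Prod>i\<in>UNIV. P i (s i) (a i) (s' i))"

fun state_dist ::
  "('i::finite \<Rightarrow> 's set) \<Rightarrow> ('i \<Rightarrow> 'a set) \<Rightarrow> ('i \<Rightarrow> 's \<Rightarrow> 'a \<Rightarrow> 's \<Rightarrow> real) \<Rightarrow>
   ('i \<Rightarrow> 's \<Rightarrow> 'a \<Rightarrow> real) \<Rightarrow> ('i \<Rightarrow> 's) \<Rightarrow> nat \<Rightarrow> ('i \<Rightarrow> 's) \<Rightarrow> real" where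
  "state_dist S A P xi s0 0 = (\<lambda>s. if s = s0 then 1 else 0)"
| "state_dist S A P xi s0 (Suc t) = (\<lambda>s'.
     \<Sum>s\<in>joint_states S. state_dist S A P xi s0 t s *
        (\<Sum>a\<in>joint_actions A. joint_policy xi s a * joint_trans P s a s'))"

definition expected_reward ::
  "('i::finite \<Rightarrow> 's set) \<Rightarrow> ('i \<Rightarrow> 'a set) \<Rightarrow> ('i \<Rightarrow> 's \<Rightarrow> 'a \<Rightarrow> 's \<Rightarrow> real) \<Rightarrow>
   ('i \<Rightarrow> 's \<Rightarrow> 'a \<Rightarrow> real) \<Rightarrow> (('i \<Rightarrow> 's) \<Rightarrow> ('i \<Rightarrow> 'a) \<Rightarrow> real) \<Rightarrow> ('i \<Rightarrow> 's) \<Rightarrow> nat \<Rightarrow> real" where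
  "expected_reward S A P xi R s0 t =
     (\<Sum>s\<in>joint_states S. state_dist S A P xi s0 t s *
        (\<Sum>a\<in>joint_actions A. joint_policy xi s a * R s a))"

text \<open>Discounted value \<Sum>_{t\<ge>0} \<gamma>^t E_xi[R(s(t),a(t)) | s(0)=s0].
  V_i^xi is disc_value with R = r i; the potential \<Phi>^xi is disc_value with R = \<phi>.\<close>
definition disc_value ::
  "('i::finite \<Rightarrow> 's set) \<Rightarrow> ('i \<Rightarrow> 'a set) \<Rightarrow> ('i \<Rightarrow> 's \<Rightarrow> 'a \<Rightarrow> 's \<Rightarrow> real) \<Rightarrow> real \<Rightarrow>
   ('i \<Rightarrow> 's \<Rightarrow> 'a \<Rightarrow> real) \<Rightarrow> (('i \<Rightarrow> 's) \<Rightarrow> ('i \<Rightarrow> 'a) \<Rightarrow> real) \<Rightarrow> ('i \<Rightarrow> 's) \<Rightarrow> real" where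
  "disc_value S A P \<gamma> xi R s0 = (\<Sum>t. \<gamma> ^ t * expected_reward S A P xi R s0 t)"

end

theory Submission
  imports Defs
begin

fun lq :: "'s set \<Rightarrow> 'a set \<Rightarrow> ('s \<Rightarrow> 'a \<Rightarrow> 's \<Rightarrow> real) \<Rightarrow> ('s \<Rightarrow> 'a \<Rightarrow> real) \<Rightarrow> 's \<Rightarrow> nat \<Rightarrow> 's \<Rightarrow> real" where
  "lq Sj Aj Pj xj x0 0 = (\<lambda>x. if x = x0 then 1 else 0)"
| "lq Sj Aj Pj xj x0 (Suc t) = (\<lambda>x'. \<Sum>x\<in>Sj. lq Sj Aj Pj xj x0 t x * (\<Sum>y\<in>Aj. xj x y * Pj x y x'))"

lemma state_dist_prod:
  fixes S :: "'i::finite \<Rightarrow> 's set"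
  assumes finS: "\<And>i. finite (S i)" and finA: "\<And>i. finite (A i)"
  shows "state_dist S A P xi s0 t s = (\<Prod>j\<in>UNIV. lq (S j) (A j) (P j) (xi j) (s0 j) t (s j))"
proof (induction t arbitrary: s)
  case 0
  show ?case
  proof (cases "s = s0")
    case True then show ?thesis by simp
  next
    case False
    then obtain j where "s j \<noteq> s0 j" by auto
    then show ?thesis using False by (simp add: prod_zero_iff) (metis (mono_tags, lifting) UNIV_I)
  qed
next
  case (Suc t)
  have "state_dist S A P xi s0 (Suc t) s = (\<Sum>z\<in>joint_states S. (\<Prod>j\<in>UNIV. lq (S j) (A j) (P j) (xi j) (s0 j) t (z j)) *
        (\<Prod>j\<in>UNIV. \<Sum>y\<in>A j. xi j (z j) y * P j (z j) y (s j)))"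
    apply (simp add: Suc)
    apply (rule sum.cong[OF refl])
    apply (subst prod_sum_PiE)
    apply (auto simp: finA joint_actions_def joint_policy_def joint_trans_def prod.distrib)
    done
  also have "\<dots> = (\<Sum>z\<in>joint_states S. (\<Prod>j\<in>UNIV. lq (S j) (A j) (P j) (xi j) (s0 j) t (z j) *
        (\<Sum>y\<in>A j. xi j (z j) y * P j (z j) y (s j))))"
    by (simp add: prod.distrib)
  also have "\<dots> = (\<Prod>j\<in>UNIV. lq (S j) (A j) (P j) (xi j) (s0 j) (Suc t) (s j))"
    by (simp add: joint_states_def prod_sum_PiE finS)
  finally show ?case .
qed

lemma decomp:
  fixes S :: "'i::finite \<Rightarrow> 's set" and F :: "('i\<Rightarrow>'s) \<Rightarrow> real"
  shows "(\<Sum>s\<in>Pi\<^sub>E UNIV S. F s) = (\<Sum>x\<in>S i. \<Sum>g\<in>Pi\<^sub>E (-{i}) S. F (g(i:=x)))"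
proof -
  have e: "Pi\<^sub>E UNIV S = (\<lambda>(y,g). g(i:=y)) ` (S i \<times> Pi\<^sub>E (-{i}) S)"
  proof -
    have u: "insert i (-{i}) = UNIV" by auto
    show ?thesis using PiE_insert_eq[of i "-{i}" S] unfolding u .
  qed
  have "(\<Sum>s\<in>Pi\<^sub>E UNIV S. F s) = (\<Sum>p\<in>S i \<times> Pi\<^sub>E (-{i}) S. F ((\<lambda>(y,g). g(i:=y)) p))"
    unfolding e by (rule sum.reindex_cong[OF inj_combinator refl refl]) simp
  also have "\<dots> = (\<Sum>x\<in>S i. \<Sum>g\<in>Pi\<^sub>E (-{i}) S. F (g(i:=x)))"
    by (simp add: sum.cartesian_product split_def)
  finally show ?thesis .
qed

lemma indep:
  fixes S :: "'i::finite \<Rightarrow> 's set" and A :: "'i \<Rightarrow> 'a set"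
    and W W' :: "'i \<Rightarrow> 's \<Rightarrow> 'a \<Rightarrow> real" and G :: "('i\<Rightarrow>'s) \<Rightarrow> ('i\<Rightarrow>'a) \<Rightarrow> real"
  assumes fin: "\<And>j. finite (S j)" "\<And>j. finite (A j)"
    and WW: "\<And>j. j \<noteq> i \<Longrightarrow> W' j = W j"
    and s1: "(\<Sum>x\<in>S i. \<Sum>y\<in>A i. W i x y) = 1" and s1': "(\<Sum>x\<in>S i. \<Sum>y\<in>A i. W' i x y) = 1"
    and inv: "\<And>s a x y. s \<in> Pi\<^sub>E UNIV S \<Longrightarrow> a \<in> Pi\<^sub>E UNIV A \<Longrightarrow> x \<in> S i \<Longrightarrow> y \<in> A i \<Longrightarrow>
       G (s(i:=x)) (a(i:=y)) = G s a"
  shows "(\<Sum>s\<in>Pi\<^sub>E UNIV S. \<Sum>a\<in>Pi\<^sub>E UNIV A. (\<Prod>j\<in>UNIV. W j (s j) (a j)) * G s a)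
       = (\<Sum>s\<in>Pi\<^sub>E UNIV S. \<Sum>a\<in>Pi\<^sub>E UNIV A. (\<Prod>j\<in>UNIV. W' j (s j) (a j)) * G s a)"
proof (cases "S i = {} \<or> A i = {}")
  case True
  then have "Pi\<^sub>E UNIV S = {} \<or> Pi\<^sub>E UNIV A = {}" by (auto simp: PiE_eq_empty_iff)
  then show ?thesis by auto
next
  case False
  then obtain c d where cd: "c \<in> S i" "d \<in> A i" by auto
  have key: "(\<Sum>s\<in>Pi\<^sub>E UNIV S. \<Sum>a\<in>Pi\<^sub>E UNIV A. (\<Prod>j\<in>UNIV. V j (s j) (a j)) * G s a)
     = (\<Sum>x\<in>S i. \<Sum>y\<in>A i. V i x y) *
       (\<Sum>g\<in>Pi\<^sub>E (-{i}) S. \<Sum>h\<in>Pi\<^sub>E (-{i}) A. (\<Prod>j\<in>-{i}. V j (g j) (h j)) * G (g(i:=c)) (h(i:=d)))"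
    for V :: "'i \<Rightarrow> 's \<Rightarrow> 'a \<Rightarrow> real"
  proof -
    have pr: "(\<Prod>j\<in>UNIV. V j (s j) (a j)) = V i (s i) (a i) * (\<Prod>j\<in>-{i}. V j (s j) (a j))" for s a
      using prod.remove[of UNIV i "\<lambda>j. V j (s j) (a j)"] by (simp add: Compl_eq_Diff_UNIV)
    have pr2: "(\<Prod>j\<in>-{i}. V j ((g(i:=x)) j) ((h(i:=y)) j)) = (\<Prod>j\<in>-{i}. V j (g j) (h j))" for g h x y
      by (rule prod.cong) auto
    have G2: "G (g(i:=x)) (h(i:=y)) = G (g(i:=c)) (h(i:=d))"
      if "g \<in> Pi\<^sub>E (-{i}) S" "h \<in> Pi\<^sub>E (-{i}) A" "x \<in> S i" "y \<in> A i" for g h x y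
    proof -
      have u: "insert i (-{i}) = UNIV" by auto
      have m1: "g(i:=x) \<in> Pi\<^sub>E UNIV S" using that PiE_fun_upd[of x S i g "-{i}"] unfolding u by simp
      have m2: "h(i:=y) \<in> Pi\<^sub>E UNIV A" using that PiE_fun_upd[of y A i h "-{i}"] unfolding u by simp
      have "G ((g(i:=x))(i:=c)) ((h(i:=y))(i:=d)) = G (g(i:=x)) (h(i:=y))"
        by (rule inv[OF m1 m2 cd])
      then show ?thesis by simp
    qed
    have "(\<Sum>s\<in>Pi\<^sub>E UNIV S. \<Sum>a\<in>Pi\<^sub>E UNIV A. (\<Prod>j\<in>UNIV. V j (s j) (a j)) * G s a)
      = (\<Sum>x\<in>S i. \<Sum>g\<in>Pi\<^sub>E (-{i}) S. \<Sum>y\<in>A i. \<Sum>h\<in>Pi\<^sub>E (-{i}) A.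
           V i x y * ((\<Prod>j\<in>-{i}. V j (g j) (h j)) * G (g(i:=c)) (h(i:=d))))"
      apply (subst decomp[of _ _ i])
      apply (subst decomp[of _ _ i])
      apply (intro sum.cong refl)
      apply (subst pr)
      apply (simp only: pr2 fun_upd_same)
      apply (subst G2, assumption+)
      apply (simp add: mult.assoc)
      done
    also have "\<dots> = (\<Sum>x\<in>S i. \<Sum>y\<in>A i. \<Sum>g\<in>Pi\<^sub>E (-{i}) S. \<Sum>h\<in>Pi\<^sub>E (-{i}) A.
           V i x y * ((\<Prod>j\<in>-{i}. V j (g j) (h j)) * G (g(i:=c)) (h(i:=d))))"
      by (intro sum.cong refl) (rule sum.swap)
    also have "\<dots> = (\<Sum>x\<in>S i. \<Sum>y\<in>A i. V i x y *
           (\<Sum>g\<in>Pi\<^sub>E (-{i}) S. \<Sum>h\<in>Pi\<^sub>E (-{i}) A. (\<Prod>j\<in>-{i}. V j (g j) (h j)) * G (g(i:=c)) (h(i:=d))))"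
      by (simp add: sum_distrib_left)
    also have "\<dots> = (\<Sum>x\<in>S i. \<Sum>y\<in>A i. V i x y) *
       (\<Sum>g\<in>Pi\<^sub>E (-{i}) S. \<Sum>h\<in>Pi\<^sub>E (-{i}) A. (\<Prod>j\<in>-{i}. V j (g j) (h j)) * G (g(i:=c)) (h(i:=d)))"
      by (simp add: sum_distrib_right)
    finally show ?thesis .
  qed
  have pw: "(\<Prod>j\<in>-{i}. W' j (g j) (h j)) = (\<Prod>j\<in>-{i}. W j (g j) (h j))" for g h
    by (rule prod.cong) (auto simp: WW)
  show ?thesis unfolding key s1 s1' pw ..
qed


lemma lq_distr:
  assumes fS: "finite Sj" and fA: "finite Aj" and lp: "local_policy Sj Aj xj"
    and tr: "\<forall>si\<in>Sj. \<forall>ai\<in>Aj. is_distr Sj (Pj si ai)" and x0: "x0 \<in> Sj"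
  shows "(\<forall>x\<in>Sj. lq Sj Aj Pj xj x0 t x \<ge> 0) \<and> (\<Sum>x\<in>Sj. lq Sj Aj Pj xj x0 t x) = 1"
proof (induction t)
  case 0
  then show ?case using x0 fS by simp
next
  case (Suc t)
  have xn: "\<And>x y. x \<in> Sj \<Longrightarrow> y \<in> Aj \<Longrightarrow> xj x y \<ge> 0" and xs: "\<And>x. x \<in> Sj \<Longrightarrow> (\<Sum>y\<in>Aj. xj x y) = 1"
    using lp by (auto simp: local_policy_def is_distr_def)
  have pn: "\<And>x y x'. x \<in> Sj \<Longrightarrow> y \<in> Aj \<Longrightarrow> x' \<in> Sj \<Longrightarrow> Pj x y x' \<ge> 0"
    and ps: "\<And>x y. x \<in> Sj \<Longrightarrow> y \<in> Aj \<Longrightarrow> (\<Sum>x'\<in>Sj. Pj x y x') = 1"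
    using tr by (auto simp: is_distr_def)
  have nn: "\<forall>x\<in>Sj. lq Sj Aj Pj xj x0 (Suc t) x \<ge> 0"
    using Suc xn pn by (auto intro!: sum_nonneg mult_nonneg_nonneg)
  have "(\<Sum>x'\<in>Sj. lq Sj Aj Pj xj x0 (Suc t) x') =
      (\<Sum>x\<in>Sj. lq Sj Aj Pj xj x0 t x * (\<Sum>y\<in>Aj. xj x y * (\<Sum>x'\<in>Sj. Pj x y x')))"
  proof -
    have "(\<Sum>x'\<in>Sj. lq Sj Aj Pj xj x0 (Suc t) x') =
      (\<Sum>x\<in>Sj. \<Sum>x'\<in>Sj. lq Sj Aj Pj xj x0 t x * (\<Sum>y\<in>Aj. xj x y * Pj x y x'))"
      by (simp only: lq.simps) (rule sum.swap)
    also have "\<dots> = (\<Sum>x\<in>Sj. lq Sj Aj Pj xj x0 t x * (\<Sum>x'\<in>Sj. \<Sum>y\<in>Aj. xj x y * Pj x y x'))"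
      by (simp only: sum_distrib_left)
    also have "\<dots> = (\<Sum>x\<in>Sj. lq Sj Aj Pj xj x0 t x * (\<Sum>y\<in>Aj. \<Sum>x'\<in>Sj. xj x y * Pj x y x'))"
      by (simp only: sum.swap[where A=Sj and B=Aj])
    also have "\<dots> = (\<Sum>x\<in>Sj. lq Sj Aj Pj xj x0 t x * (\<Sum>y\<in>Aj. xj x y * (\<Sum>x'\<in>Sj. Pj x y x')))"
      by (simp only: sum_distrib_left)
    finally show ?thesis .
  qed
  also have "\<dots> = (\<Sum>x\<in>Sj. lq Sj Aj Pj xj x0 t x)"
    by (intro sum.cong refl) (simp add: ps xs)
  also have "\<dots> = 1" using Suc by simp
  finally show ?case using nn by blast
qed

lemma er_form:
  fixes S :: "'i::finite \<Rightarrow> 's set"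
  assumes finS: "\<And>i. finite (S i)" and finA: "\<And>i. finite (A i)"
  shows "expected_reward S A P xi R s0 t =
    (\<Sum>s\<in>Pi\<^sub>E UNIV S. \<Sum>a\<in>Pi\<^sub>E UNIV A.
       (\<Prod>j\<in>UNIV. lq (S j) (A j) (P j) (xi j) (s0 j) t (s j) * xi j (s j) (a j)) * R s a)"
  unfolding expected_reward_def state_dist_prod[OF finS finA] joint_states_def joint_actions_def
    joint_policy_def
  apply (intro sum.cong refl)
  apply (simp only: sum_distrib_left prod.distrib mult.assoc)
  done

lemma er_bound:
  fixes S :: "'i::finite \<Rightarrow> 's set"
  assumes finS: "\<And>i. finite (S i)" and finA: "\<And>i. finite (A i)"
    and trans: "local_transitions S A P" and pp: "policy_profile S A xi"
    and s0: "s0 \<in> joint_states S"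
  shows "\<bar>expected_reward S A P xi R s0 t\<bar> \<le>
    (\<Sum>s\<in>Pi\<^sub>E UNIV S. \<Sum>a\<in>Pi\<^sub>E UNIV A. \<bar>R s a\<bar>)"
proof -
  have w01: "0 \<le> lq (S j) (A j) (P j) (xi j) (s0 j) t x * xi j x y \<and>
             lq (S j) (A j) (P j) (xi j) (s0 j) t x * xi j x y \<le> 1"
    if "x \<in> S j" "y \<in> A j" for j x y
  proof -
    have lp: "local_policy (S j) (A j) (xi j)" using pp by (simp add: policy_profile_def)
    have tr: "\<forall>si\<in>S j. \<forall>ai\<in>A j. is_distr (S j) (P j si ai)"
      using trans by (simp add: local_transitions_def)
    have x0: "s0 j \<in> S j" using s0 by (auto simp: joint_states_def)
    note d = lq_distr[OF finS finA lp tr x0, of t]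
    have q0: "lq (S j) (A j) (P j) (xi j) (s0 j) t x \<ge> 0" using d that by blast
    have q1: "lq (S j) (A j) (P j) (xi j) (s0 j) t x \<le> 1"
      using d that member_le_sum[of x "S j" "lq (S j) (A j) (P j) (xi j) (s0 j) t"] finS by auto
    have x0': "xi j x y \<ge> 0" and xs: "(\<Sum>y\<in>A j. xi j x y) = 1"
      using lp that by (auto simp: local_policy_def is_distr_def)
    have x1: "xi j x y \<le> 1"
      using xs that member_le_sum[of y "A j" "xi j x"] finA lp
      by (auto simp: local_policy_def is_distr_def)
    show ?thesis using q0 q1 x0' x1 by (simp add: mult_le_one)
  qed
  have "\<bar>expected_reward S A P xi R s0 t\<bar> \<le>
    (\<Sum>s\<in>Pi\<^sub>E UNIV S. \<Sum>a\<in>Pi\<^sub>E UNIV A.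
       \<bar>(\<Prod>j\<in>UNIV. lq (S j) (A j) (P j) (xi j) (s0 j) t (s j) * xi j (s j) (a j)) * R s a\<bar>)"
    unfolding er_form[OF finS finA]
    by (rule order.trans[OF sum_abs]) (intro sum_mono sum_abs)
  also have "\<dots> \<le> (\<Sum>s\<in>Pi\<^sub>E UNIV S. \<Sum>a\<in>Pi\<^sub>E UNIV A. \<bar>R s a\<bar>)"
  proof (intro sum_mono)
    fix s a assume s: "s \<in> Pi\<^sub>E UNIV S" and a: "a \<in> Pi\<^sub>E UNIV A"
    let ?p = "(\<Prod>j\<in>UNIV. lq (S j) (A j) (P j) (xi j) (s0 j) t (s j) * xi j (s j) (a j))"
    have sj: "s j \<in> S j" "a j \<in> A j" for j using s a by (auto simp: PiE_iff)
    have "0 \<le> ?p" by (rule prod_nonneg) (use w01 sj in blast)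
    moreover have "?p \<le> 1" by (rule prod_le_1) (use w01 sj in blast)
    ultimately show "\<bar>?p * R s a\<bar> \<le> \<bar>R s a\<bar>"
      by (simp add: abs_mult mult_left_le_one_le)
  qed
  finally show ?thesis .
qed

lemma dv_summable:
  fixes S :: "'i::finite \<Rightarrow> 's set"
  assumes finS: "\<And>i. finite (S i)" and finA: "\<And>i. finite (A i)"
    and trans: "local_transitions S A P" and pp: "policy_profile S A xi"
    and s0: "s0 \<in> joint_states S" and g: "0 < \<gamma>" "\<gamma> < 1"
  shows "summable (\<lambda>t. \<gamma> ^ t * expected_reward S A P xi R s0 t)"
proof (rule summable_comparison_test)
  let ?B = "(\<Sum>s\<in>Pi\<^sub>E UNIV S. \<Sum>a\<in>Pi\<^sub>E UNIV A. \<bar>R s a\<bar>)"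
  show "\<exists>N. \<forall>n\<ge>N. norm (\<gamma> ^ n * expected_reward S A P xi R s0 n) \<le> \<gamma> ^ n * ?B"
    using er_bound[OF finS finA trans pp s0] g
    by (auto simp: abs_mult intro!: mult_left_mono)
  show "summable (\<lambda>n. \<gamma> ^ n * ?B)"
    using g by (intro summable_mult2 summable_geometric) simp
qed

theorem mainTheorem3:
  fixes S :: "'i::finite \<Rightarrow> 's set" and A :: "'i \<Rightarrow> 'a set"
    and P :: "'i \<Rightarrow> 's \<Rightarrow> 'a \<Rightarrow> 's \<Rightarrow> real"
    and r :: "'i \<Rightarrow> ('i \<Rightarrow> 's) \<Rightarrow> ('i \<Rightarrow> 'a) \<Rightarrow> real"
    and \<phi> :: "('i \<Rightarrow> 's) \<Rightarrow> ('i \<Rightarrow> 'a) \<Rightarrow> real"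
    and \<gamma> :: real
  assumes finS: "\<And>i. finite (S i)" and finA: "\<And>i. finite (A i)"
    and gamma: "0 < \<gamma>" "\<gamma> < 1"
    and trans: "local_transitions S A P"
    and potential: "\<And>i s a si' ai'. s \<in> joint_states S \<Longrightarrow> a \<in> joint_actions A \<Longrightarrow>
        si' \<in> S i \<Longrightarrow> ai' \<in> A i \<Longrightarrow>
        r i s a - r i (s(i := si')) (a(i := ai')) = \<phi> s a - \<phi> (s(i := si')) (a(i := ai'))"
  shows "\<forall>i xi xi' s. policy_profile S A xi \<longrightarrow> local_policy (S i) (A i) xi' \<longrightarrow>
           s \<in> joint_states S \<longrightarrow>
           disc_value S A P \<gamma> xi (r i) s - disc_value S A P \<gamma> (xi(i := xi')) (r i) s
         = disc_value S A P \<gamma> xi \<phi> s - disc_value S A P \<gamma> (xi(i := xi')) \<phi> s"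
proof (intro allI impI)
  fix i xi xi' s0
  assume pp: "policy_profile S A xi" and lp': "local_policy (S i) (A i) xi'"
    and s0: "s0 \<in> joint_states S"
  define xi2 where "xi2 = xi(i := xi')"
  have pp2: "policy_profile S A xi2" using pp lp' by (auto simp: policy_profile_def xi2_def)
  have tr: "\<forall>si\<in>S i. \<forall>ai\<in>A i. is_distr (S i) (P i si ai)"
    using trans by (simp add: local_transitions_def)
  have x0: "s0 i \<in> S i" using s0 by (auto simp: joint_states_def)
  have sumW: "(\<Sum>x\<in>S i. \<Sum>y\<in>A i. lq (S i) (A i) (P i) (\<zeta> i) (s0 i) t x * \<zeta> i x y) = 1"
    if "policy_profile S A \<zeta>" for \<zeta> t
  proof -
    have lp: "local_policy (S i) (A i) (\<zeta> i)" using that by (simp add: policy_profile_def)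
    have "(\<Sum>x\<in>S i. \<Sum>y\<in>A i. lq (S i) (A i) (P i) (\<zeta> i) (s0 i) t x * \<zeta> i x y)
        = (\<Sum>x\<in>S i. lq (S i) (A i) (P i) (\<zeta> i) (s0 i) t x * (\<Sum>y\<in>A i. \<zeta> i x y))"
      by (simp add: sum_distrib_left)
    also have "\<dots> = (\<Sum>x\<in>S i. lq (S i) (A i) (P i) (\<zeta> i) (s0 i) t x)"
      using lp by (intro sum.cong refl) (auto simp: local_policy_def is_distr_def)
    also have "\<dots> = 1" using lq_distr[OF finS finA lp tr x0] by blast
    finally show ?thesis .
  qed
  have diffE: "expected_reward S A P \<zeta> (r i) s0 t - expected_reward S A P \<zeta> \<phi> s0 t =
     (\<Sum>s\<in>Pi\<^sub>E UNIV S. \<Sum>a\<in>Pi\<^sub>E UNIV A.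
       (\<Prod>j\<in>UNIV. lq (S j) (A j) (P j) (\<zeta> j) (s0 j) t (s j) * \<zeta> j (s j) (a j)) * (r i s a - \<phi> s a))"
    for \<zeta> t
    unfolding er_form[OF finS finA]
    by (simp add: sum_subtractf[symmetric] right_diff_distrib)
  have eqE: "expected_reward S A P xi (r i) s0 t - expected_reward S A P xi \<phi> s0 t =
             expected_reward S A P xi2 (r i) s0 t - expected_reward S A P xi2 \<phi> s0 t" for t
    unfolding diffE
  proof (rule indep[where i=i])
    show "\<And>j. finite (S j)" "\<And>j. finite (A j)" by (fact finS, fact finA)
    show "\<And>j. j \<noteq> i \<Longrightarrow> (\<lambda>x y. lq (S j) (A j) (P j) (xi2 j) (s0 j) t x * xi2 j x y) =
                  (\<lambda>x y. lq (S j) (A j) (P j) (xi j) (s0 j) t x * xi j x y)"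
      by (simp add: xi2_def)
    show "(\<Sum>x\<in>S i. \<Sum>y\<in>A i. lq (S i) (A i) (P i) (xi i) (s0 i) t x * xi i x y) = 1"
      by (rule sumW[OF pp])
    show "(\<Sum>x\<in>S i. \<Sum>y\<in>A i. lq (S i) (A i) (P i) (xi2 i) (s0 i) t x * xi2 i x y) = 1"
      by (rule sumW[OF pp2])
    fix s a x y assume "s \<in> Pi\<^sub>E UNIV S" "a \<in> Pi\<^sub>E UNIV A" "x \<in> S i" "y \<in> A i"
    then show "r i (s(i := x)) (a(i := y)) - \<phi> (s(i := x)) (a(i := y)) = r i s a - \<phi> s a"
      using potential[of s a x i y] by (simp add: joint_states_def joint_actions_def)
  qed
  note sm = dv_summable[OF finS finA trans _ s0 gamma]
  have "disc_value S A P \<gamma> xi (r i) s0 - disc_value S A P \<gamma> xi \<phi> s0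
      = (\<Sum>t. \<gamma> ^ t * expected_reward S A P xi (r i) s0 t - \<gamma> ^ t * expected_reward S A P xi \<phi> s0 t)"
    unfolding disc_value_def by (rule suminf_diff[OF sm[OF pp] sm[OF pp]])
  also have "\<dots> = (\<Sum>t. \<gamma> ^ t * expected_reward S A P xi2 (r i) s0 t - \<gamma> ^ t * expected_reward S A P xi2 \<phi> s0 t)"
    using eqE by (simp add: right_diff_distrib[symmetric])
  also have "\<dots> = disc_value S A P \<gamma> xi2 (r i) s0 - disc_value S A P \<gamma> xi2 \<phi> s0"
    unfolding disc_value_def by (rule suminf_diff[OF sm[OF pp2] sm[OF pp2], symmetric])
  finally show "disc_value S A P \<gamma> xi (r i) s0 - disc_value S A P \<gamma> (xi(i := xi')) (r i) s0
         = disc_value S A P \<gamma> xi \<phi> s0 - disc_value S A P \<gamma> (xi(i := xi')) \<phi> s0"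
    unfolding xi2_def by linarith
qed

end
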